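(* Let $A\subseteq[n]^2$ and suppose there is $T\in\mathbb{N}$ with $|\{v\in[n]:(u,v)\in A\}|=T$ for every $u\in[n]$. Let $\Gamma=\Gamma(A)$ and $\Gamma_\uparrow=\Gamma_\uparrow(A)$ be the gates defined below. Then for every $x\in\{0,1\}^{4n}$ satisfying $\varphi_{one}(x)$: $\mathrm{Sig}(\Gamma_\uparrow,x)-\mathrm{Sig}(\Gamma,x)=0$ if $\neg\varphi_{prop}(x)$; $=n-2T-2$ if $\varphi_{prop}(x)$ and $(x_W,x_N)\notin A$; $=n-2T+2$ if $\varphi_{prop}(x)$ and $(x_W,x_N)\in A$.
   Context: $\Gamma(A)$: vertices $b_{i,j}$, $(i,j)\in[n]^2$, with the south edge of $b_{i,j}$ equal to the north edge of $b_{i+1,j}$ and the east edge of $b_{i,j}$ equal to the west edge of $b_{i,j+1}$; $4n$ dangling edges ordered as north edges of the top row (columns $1..n$), east edges of the last column (rows $1..n$), south edges of the bottom row, west edges of the first column; $x=x_Nx_Ex_Sx_W$ accordingly, weight-one strings $0^{v-1}10^{n-v}$ identified with $v$. Apices $a_1,a_2$ with signature $\mathtt{HW}_{=1}$ (value $1$ iff exactly one incident edge is active). For $\tau\notin A$, $b_\tau$ has signature $\mathtt{PASS}$; for $\tau\in A$, $b_\tau$ is joined to $a_1,a_2$ (5th and 6th edges) and has signature $\mathtt{PRE}$. All edge weights $1$. $\Gamma_\uparrow(A)$: obtained from $\Gamma(A)$ by adding a new row of vertices $b_{0,1},\dots,b_{0,n}$ above row $1$ and a new row $b_{n+1,1},\dots,b_{n+1,n}$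 below row $n$ ("dummy rows"): $b_{0,j}$'s south edge is $b_{1,j}$'s north edge and $b_{0,j}$'s north edge becomes the $j$-th northern dangling edge; $b_{n+1,j}$'s north edge is $b_{n,j}$'s south edge and its south edge becomes the $j$-th southern dangling edge; each dummy vertex is joined to $a_1$ and $a_2$ and has the signature $h(a,c,z_5,z_6)=\mathtt{PRE}(a\,0\,c\,0\,z_5z_6)$ on its (north, south, $a_1$-edge, $a_2$-edge). Signatures: for $x\in\{0,1\}^4$ (north, east, south, west), $\mathtt{PASS}(1111)=-1$, $\mathtt{PASS}(0000)=\mathtt{PASS}(0101)=\mathtt{PASS}(1010)=1$, else $0$; $\mathtt{PRE}(x00)=\mathtt{PASS}(x)$, $\mathtt{PRE}(xy)=1$ for $xy\in\{101011,111111,100001,110101,001010,011110\}$, else $0$. $\varphi_{one}(x)\equiv\mathrm{hw}(x_N)=\mathrm{hw}(x_W)=1$; $\varphi_{prop}(x)\equiv x_N=x_S\wedge x_W=x_E$. $\mathrm{Sig}(\Gamma,x)=\sum_y w_\Gamma(xy)\prod_v f_v((xy)|_{I(v)})$ over assignments $y$ to non-dangling edges. *)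

theory Defs
  imports Main
begin

text \<open>Vertices b_(i,j) have rows i and columns j (nat).
  VE i j = the north edge of b_(i,j) (= south edge of b_(i-1,j));
  HE i j = the west edge of b_(i,j) (= east edge of b_(i,j-1));
  AE k i j = the edge joining b_(i,j) to apex a_k (k = 1, 2).\<close>
datatype edge = VE nat nat | HE nat nat | AE nat nat nat

definition PASS :: "bool \<Rightarrow> bool \<Rightarrow> bool \<Rightarrow> bool \<Rightarrow> int" where
  "PASS N E S W =
     (if N \<and> E \<and> S \<and> W then -1
      else if [N,E,S,W] \<in> {[False,False,False,False],[False,True,False,True],[True,False,True,False]}
      then 1 else 0)"

definition PRE :: "bool \<Rightarrow> bool \<Rightarrow> bool \<Rightarrow> bool \<Rightarrow> bool \<Rightarrow> bool \<Rightarrow> int" where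
  "PRE N E S W z5 z6 =
     (if \<not> z5 \<and> \<not> z6 then PASS N E S W
      else if [N,E,S,W,z5,z6] \<in>
        {[True,False,True,False,True,True], [True,True,True,True,True,True],
         [True,False,False,False,False,True], [True,True,False,True,False,True],
         [False,False,True,False,True,False], [False,True,True,True,True,False]}
      then 1 else 0)"

text \<open>Signature of the dummy vertices, on (north, south, a1-edge, a2-edge).\<close>
definition hsig :: "bool \<Rightarrow> bool \<Rightarrow> bool \<Rightarrow> bool \<Rightarrow> int" where
  "hsig a c z5 z6 = PRE a False c False z5 z6"

definition HW1 :: "edge set \<Rightarrow> (edge \<Rightarrow> bool) \<Rightarrow> int" where
  "HW1 I \<sigma> = (if card {e \<in> I. \<sigma> e} = 1 then 1 else 0)"

definition xN :: "nat \<Rightarrow> bool list \<Rightarrow> bool list" where "xN n x = take n x"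
definition xE :: "nat \<Rightarrow> bool list \<Rightarrow> bool list" where "xE n x = take n (drop n x)"
definition xS :: "nat \<Rightarrow> bool list \<Rightarrow> bool list" where "xS n x = take n (drop (2*n) x)"
definition xW :: "nat \<Rightarrow> bool list \<Rightarrow> bool list" where "xW n x = take n (drop (3*n) x)"

definition hw :: "bool list \<Rightarrow> nat" where "hw s = length (filter id s)"

definition wpos :: "bool list \<Rightarrow> nat" where
  "wpos s = (THE v. v \<in> {1..length s} \<and>
                    s = replicate (v - 1) False @ True # replicate (length s - v) False)"

definition phi_one :: "nat \<Rightarrow> bool list \<Rightarrow> bool" where
  "phi_one n x \<longleftrightarrow> hw (xN n x) = 1 \<and> hw (xW n x) = 1"

definition phi_prop :: "nat \<Rightarrow> bool list \<Rightarrow> bool" where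
  "phi_prop n x \<longleftrightarrow> xN n x = xS n x \<and> xW n x = xE n x"

text \<open>In Gamma(A) the northern dangling edges are VE 1 j
  and the southern ones VE (n+1) j; in Gamma_up(A) they are VE 0 j and VE (n+2) j.\<close>
definition dangling :: "nat \<Rightarrow> nat \<Rightarrow> nat \<Rightarrow> bool list \<Rightarrow> edge \<Rightarrow> bool" where
  "dangling n tp bt x e = (case e of
      VE i j \<Rightarrow> (if i = tp then x ! (j - 1) else if i = bt then x ! (2*n + j - 1) else False)
    | HE i j \<Rightarrow> (if j = n + 1 then x ! (n + i - 1) else if j = 1 then x ! (3*n + i - 1) else False)
    | AE k i j \<Rightarrow> False)"

definition grid_val :: "nat \<Rightarrow> (nat \<times> nat) set \<Rightarrow> (edge \<Rightarrow> bool) \<Rightarrow> int" where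
  "grid_val n A \<sigma> = (\<Prod>(i,j)\<in>{1..n}\<times>{1..n}.
      if (i,j) \<in> A
      then PRE (\<sigma> (VE i j)) (\<sigma> (HE i (j+1))) (\<sigma> (VE (i+1) j)) (\<sigma> (HE i j))
               (\<sigma> (AE 1 i j)) (\<sigma> (AE 2 i j))
      else PASS (\<sigma> (VE i j)) (\<sigma> (HE i (j+1))) (\<sigma> (VE (i+1) j)) (\<sigma> (HE i j)))"

definition apexG :: "nat \<Rightarrow> (nat \<times> nat) set \<Rightarrow> edge set" where
  "apexG k A = {AE k i j | i j. (i,j) \<in> A}"

definition internalG :: "nat \<Rightarrow> (nat \<times> nat) set \<Rightarrow> edge set" where
  "internalG n A = {VE i j | i j. i \<in> {2..n} \<and> j \<in> {1..n}}
                 \<union> {HE i j | i j. i \<in> {1..n} \<and> j \<in> {2..n}}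
                 \<union> apexG 1 A \<union> apexG 2 A"

definition valG :: "nat \<Rightarrow> (nat \<times> nat) set \<Rightarrow> (edge \<Rightarrow> bool) \<Rightarrow> int" where
  "valG n A \<sigma> = grid_val n A \<sigma> * HW1 (apexG 1 A) \<sigma> * HW1 (apexG 2 A) \<sigma>"

text \<open>Sig(Gamma, x): sum over assignments to the non-dangling edges (represented by the set
  S of active ones); all edge weights are 1, so the weight factor is 1.\<close>
definition SigG :: "nat \<Rightarrow> (nat \<times> nat) set \<Rightarrow> bool list \<Rightarrow> int" where
  "SigG n A x = (\<Sum>S\<in>Pow (internalG n A).
      valG n A (\<lambda>e. if e \<in> internalG n A then e \<in> S else dangling n 1 (n+1) x e))"

definition apexU :: "nat \<Rightarrow> nat \<Rightarrow> (nat \<times> nat) set \<Rightarrow> edge set" where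
  "apexU n k A = {AE k i j | i j. (i,j) \<in> A \<or> (i \<in> {0, n+1} \<and> j \<in> {1..n})}"

definition internalU :: "nat \<Rightarrow> (nat \<times> nat) set \<Rightarrow> edge set" where
  "internalU n A = {VE i j | i j. i \<in> {1..n+1} \<and> j \<in> {1..n}}
                 \<union> {HE i j | i j. i \<in> {1..n} \<and> j \<in> {2..n}}
                 \<union> apexU n 1 A \<union> apexU n 2 A"

definition dummy_val :: "nat \<Rightarrow> (edge \<Rightarrow> bool) \<Rightarrow> int" where
  "dummy_val n \<sigma> = (\<Prod>(i,j)\<in>{0, n+1}\<times>{1..n}.
      hsig (\<sigma> (VE i j)) (\<sigma> (VE (i+1) j)) (\<sigma> (AE 1 i j)) (\<sigma> (AE 2 i j)))"

definition valU :: "nat \<Rightarrow> (nat \<times> nat) set \<Rightarrow> (edge \<Rightarrow> bool) \<Rightarrow> int" where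
  "valU n A \<sigma> = grid_val n A \<sigma> * dummy_val n \<sigma> * HW1 (apexU n 1 A) \<sigma> * HW1 (apexU n 2 A) \<sigma>"

definition SigU :: "nat \<Rightarrow> (nat \<times> nat) set \<Rightarrow> bool list \<Rightarrow> int" where
  "SigU n A x = (\<Sum>S\<in>Pow (internalU n A).
      valU n A (\<lambda>e. if e \<in> internalU n A then e \<in> S else dangling n 0 (n+2) x e))"

end

theory Submission
  imports Defs
begin


definition step :: "bool \<Rightarrow> bool \<Rightarrow> bool \<Rightarrow> bool" where
  "step N a b = (a \<or> (N \<and> \<not> b))"

definition prof :: "(nat \<Rightarrow> bool) \<Rightarrow> nat \<times> nat \<Rightarrow> nat \<times> nat \<Rightarrow> nat \<Rightarrow> nat \<Rightarrow> bool" where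
  "prof t p1 p2 i j =
    (if snd p1 = j \<and> fst p1 < i \<and> (\<not> (snd p2 = j \<and> fst p2 < i) \<or> fst p2 \<le> fst p1) then True
     else if snd p2 = j \<and> fst p2 < i then False else t j)"

lemma prof_Suc: "prof t p1 p2 (Suc i) j = step (prof t p1 p2 i j) ((i,j) = p1) ((i,j) = p2)"
  by (cases p1; cases p2) (auto simp: prof_def step_def)

lemma prof_low: "fst p1 \<ge> i \<Longrightarrow> fst p2 \<ge> i \<Longrightarrow> prof t p1 p2 i j = t j"
  by (auto simp: prof_def)

definition Lg :: "bool \<Rightarrow> bool \<Rightarrow> bool \<Rightarrow> int" where
  "Lg N a b = (if (a \<and> \<not> b \<and> N) \<or> (b \<and> \<not> N) then 0 else 1)"

definition Sg :: "bool \<Rightarrow> bool \<Rightarrow> bool \<Rightarrow> bool \<Rightarrow> int" where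
  "Sg N W a b = (if \<not> a \<and> \<not> b \<and> N \<and> W then -1 else 1)"

lemma PRE_lv: "PRE N W S W a b = (if S = step N a b then Lg N a b * Sg N W a b else 0)"
  by (cases N; cases W; cases S; cases a; cases b) (simp_all add: PRE_def PASS_def step_def Lg_def Sg_def)

lemma PRE_nz: "PRE N E S W a b \<noteq> 0 \<Longrightarrow> S = step N a b \<and> E = W"
  by (cases N; cases W; cases S; cases a; cases b; cases E) (simp_all add: PRE_def PASS_def step_def)

lemma PASS_PRE: "PASS N E S W = PRE N E S W False False"
  by (simp add: PRE_def)



definition legal :: "(nat \<Rightarrow> bool) \<Rightarrow> nat \<times> nat \<Rightarrow> nat \<times> nat \<Rightarrow> int" where
  "legal t p1 p2 = Lg (prof t p1 p2 (fst p1) (snd p1)) True (p1 = p2) *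
     (if p1 = p2 then 1 else Lg (prof t p1 p2 (fst p2) (snd p2)) False True)"

definition sgnr :: "(nat \<Rightarrow> bool) \<Rightarrow> nat \<Rightarrow> nat \<Rightarrow> nat \<times> nat \<Rightarrow> nat \<times> nat \<Rightarrow> int" where
  "sgnr t n r p1 p2 = (\<Prod>j\<in>{1..n}. if prof t p1 p2 r j \<and> (r,j) \<noteq> p1 \<and> (r,j) \<noteq> p2 then -1 else 1)"

lemma prod_01:
  assumes "finite V"
  shows "(\<Prod>v\<in>V. (if P v then 0 else 1 :: int)) = (if \<exists>v\<in>V. P v then 0 else 1)"
proof (cases "\<exists>v\<in>V. P v")
  case True
  then show ?thesis using assms by (auto simp: prod_zero_iff)
next
  case False
  then show ?thesis by (auto intro: prod.neutral)
qed

lemma PF: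
  fixes t xs :: "nat \<Rightarrow> bool"
  assumes p1: "p1 \<in> {lo..hi} \<times> {1..n}" and p2: "p2 \<in> {lo..hi} \<times> {1..n}" and r: "r \<in> {lo..hi}"
  shows "(\<Prod>(i,j)\<in>{lo..hi} \<times> {1..n}. PRE (prof t p1 p2 i j) (i = r)
            (if i = hi then xs j else prof t p1 p2 (Suc i) j) (i = r) ((i,j) = p1) ((i,j) = p2))
       = (if \<forall>j\<in>{1..n}. xs j = prof t p1 p2 (Suc hi) j then 1 else 0) * legal t p1 p2 * sgnr t n r p1 p2"
proof -
  let ?V = "{lo..hi} \<times> {1..n}"
  define f1 where "f1 = (\<lambda>(i,j). if i = hi \<and> xs j \<noteq> prof t p1 p2 (Suc hi) j then 0 else (1::int))"
  define f2 where "f2 = (\<lambda>(i,j). Lg (prof t p1 p2 i j) ((i,j) = p1) ((i,j) = p2))"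
  define f3 where "f3 = (\<lambda>(i,j). Sg (prof t p1 p2 i j) (i = r) ((i,j) = p1) ((i,j) = p2))"
  have fin: "finite ?V" by simp
  have "(\<Prod>(i,j)\<in>?V. PRE (prof t p1 p2 i j) (i = r)
            (if i = hi then xs j else prof t p1 p2 (Suc i) j) (i = r) ((i,j) = p1) ((i,j) = p2))
      = (\<Prod>v\<in>?V. f1 v * f2 v * f3 v)"
    by (rule prod.cong) (auto simp: PRE_lv prof_Suc f1_def f2_def f3_def)
  also have "\<dots> = prod f1 ?V * prod f2 ?V * prod f3 ?V"
    by (simp add: prod.distrib)
  also have "prod f1 ?V = (if \<forall>j\<in>{1..n}. xs j = prof t p1 p2 (Suc hi) j then 1 else 0)"
  proof -
    have "prod f1 ?V = (\<Prod>v\<in>?V. if (fst v = hi \<and> xs (snd v) \<noteq> prof t p1 p2 (Suc hi) (snd v)) then 0 else 1)"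
      by (rule prod.cong) (auto simp: f1_def)
    also have "\<dots> = (if \<exists>v\<in>?V. fst v = hi \<and> xs (snd v) \<noteq> prof t p1 p2 (Suc hi) (snd v) then 0 else 1)"
      by (rule prod_01) simp
    finally show ?thesis using r by auto
  qed
  also have "prod f2 ?V = legal t p1 p2"
  proof -
    have "prod f2 ?V = prod f2 {p1,p2}"
      by (rule prod.mono_neutral_right) (use p1 p2 in \<open>auto simp: f2_def Lg_def split: if_splits\<close>)
    also have "\<dots> = legal t p1 p2"
      by (cases p1; cases p2) (auto simp: f2_def legal_def)
    finally show ?thesis .
  qed
  also have "prod f3 ?V = sgnr t n r p1 p2"
  proof -
    have "prod f3 ?V = prod f3 ({r} \<times> {1..n})"
      by (rule prod.mono_neutral_right) (use r in \<open>auto simp: f3_def Sg_def split: if_splits\<close>)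
    also have "\<dots> = (\<Prod>i\<in>{r}. \<Prod>j\<in>{1..n}. f3 (i,j))"
      by (simp add: prod.cartesian_product)
    also have "\<dots> = sgnr t n r p1 p2"
      by (auto simp: f3_def sgnr_def Sg_def intro!: prod.cong)
    finally show ?thesis .
  qed
  finally show ?thesis .
qed



definition slv :: "nat \<Rightarrow> nat \<Rightarrow> int" where "slv a r = (if a < r then -1 else 1)"
definition tlv :: "nat \<Rightarrow> nat \<Rightarrow> int" where "tlv a r = (if r < a then -1 else 1)"

definition Fc :: "nat \<Rightarrow> nat \<Rightarrow> nat \<Rightarrow> (nat \<Rightarrow> bool) \<Rightarrow> nat \<times> nat \<Rightarrow> nat \<times> nat \<Rightarrow> int" where
  "Fc n c r xs p1 p2 = (if snd p1 = snd p2 then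
     (if \<forall>j\<in>{1..n}. xs j = (j = c) then 1 else 0) *
     (if snd p1 = c then (if fst p2 \<le> fst p1 then slv (fst p1) r * tlv (fst p2) r else 0)
      else (if fst p1 < fst p2 then (if fst p1 < r \<and> r < fst p2 then 1 else -1) else 0))
   else if snd p2 = c then (if \<forall>j\<in>{1..n}. xs j = (j = snd p1) then 1 else 0) * slv (fst p1) r * tlv (fst p2) r
   else 0)"

lemma sgn_eval:
  fixes a1 a2 r :: nat
  assumes "b1 \<in> {1..n}" "b2 \<in> {1..n}" "\<forall>j\<in>{1..n}. t j = (j = c)" "c \<in> {1..n}"
  defines "s \<equiv> (\<lambda>j. if prof t (a1,b1) (a2,b2) r j \<and> (r,j) \<noteq> (a1,b1) \<and> (r,j) \<noteq> (a2,b2) then -1 else (1::int))"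
  shows "sgnr t n r (a1,b1) (a2,b2) = (if c = b1 \<or> c = b2 then 1 else -1) * s b1 * (if b2 = b1 then 1 else s b2)"
proof -
  have split: "{1..n} = ({1..n} - {b1,b2}) \<union> {b1,b2}" using assms by auto
  have "sgnr t n r (a1,b1) (a2,b2) = prod s {1..n}" by (simp add: sgnr_def s_def)
  also have "\<dots> = prod s ({1..n} - {b1,b2}) * prod s {b1,b2}"
    by (subst split, rule prod.union_disjoint) auto
  also have "prod s ({1..n} - {b1,b2}) = (\<Prod>j\<in>{1..n} - {b1,b2}. if j = c then -1 else 1)"
    by (rule prod.cong) (use assms in \<open>auto simp: s_def prof_def\<close>)
  also have "\<dots> = (if c = b1 \<or> c = b2 then 1 else -1)"
    using assms by auto
  also have "prod s {b1,b2} = s b1 * (if b2 = b1 then 1 else s b2)"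
    by auto
  finally show ?thesis by simp
qed

lemma legal_eval:
  assumes "b1 \<in> {1..n}" "b2 \<in> {1..n}" "\<forall>j\<in>{1..n}. t j = (j = c)"
  shows "legal t (a1,b1) (a2,b2) = (if b1 = b2 then (if b1 = c then (if a2 \<le> a1 then 1 else 0)
            else (if a1 < a2 then 1 else 0)) else (if b2 = c \<and> b1 \<noteq> c then 1 else 0))"
proof -
  have "t b1 = (b1 = c)" "t b2 = (b2 = c)" using assms by auto
  then show ?thesis by (auto simp: legal_def Lg_def prof_def)
qed

lemma Mt_cong: "(\<forall>j\<in>{1..n}. prof t p1 p2 h j = g j) \<Longrightarrow>
   (if \<forall>j\<in>{1..n}. xs j = prof t p1 p2 h j then 1 else (0::int)) = (if \<forall>j\<in>{1..n}. xs j = g j then 1 else 0)"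
  by auto

lemma Fc_eq:
  assumes b: "b1 \<in> {1..n}" "b2 \<in> {1..n}" and tc: "\<forall>j\<in>{1..n}. t j = (j = c)" and cn: "c \<in> {1..n}"
    and h: "a1 < h" "a2 < h"
  shows "(if \<forall>j\<in>{1..n}. xs j = prof t (a1,b1) (a2,b2) h j then 1 else 0) * legal t (a1,b1) (a2,b2)
          * sgnr t n r (a1,b1) (a2,b2) = Fc n c r xs (a1,b1) (a2,b2)"
proof -
  have tb: "t b1 = (b1 = c)" "t b2 = (b2 = c)" using b tc by auto
  note L = legal_eval[OF b tc]
  note S = sgn_eval[OF b tc cn]
  show ?thesis
  proof (cases "b1 = b2")
    case True
    show ?thesis
    proof (cases "b1 = c")
      case c: True
      show ?thesis
      proof (cases "a2 \<le> a1")
        case a: True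
        have M: "\<forall>j\<in>{1..n}. prof t (a1,b1) (a2,b2) h j = (j = c)"
          using tc h True c a by (auto simp: prof_def)
        have "(if prof t (a1, b1) (a2, b2) r b1 \<and> (r, b1) \<noteq> (a1, b1) \<and> (r, b1) \<noteq> (a2, b2) then -1 else (1::int))
              = slv a1 r * tlv a2 r"
          using True c a tb by (auto simp: prof_def slv_def tlv_def)
        then show ?thesis using Mt_cong[OF M] L S True c a by (simp add: Fc_def)
      next
        case a: False
        then show ?thesis using L True c by (simp add: Fc_def)
      qed
    next
      case c: False
      show ?thesis
      proof (cases "a1 < a2")
        case a: True
        have M: "\<forall>j\<in>{1..n}. prof t (a1,b1) (a2,b2) h j = (j = c)"
          using tc h True c a by (auto simp: prof_def)
        have "(if prof t (a1, b1) (a2, b2) r b1 \<and> (r, b1) \<noteq> (a1, b1) \<and> (r, b1) \<noteq> (a2, b2) then -1 else (1::int))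
              = (if a1 < r \<and> r < a2 then -1 else 1)"
          using True c a tb by (auto simp: prof_def)
        then show ?thesis using Mt_cong[OF M] L S True c a by (simp add: Fc_def)
      next
        case a: False
        then show ?thesis using L True c by (simp add: Fc_def)
      qed
    qed
  next
    case False
    show ?thesis
    proof (cases "b2 = c")
      case c: True
      have M: "\<forall>j\<in>{1..n}. prof t (a1,b1) (a2,b2) h j = (j = b1)"
        using tc h False c by (auto simp: prof_def)
      have s1: "(if prof t (a1, b1) (a2, b2) r b1 \<and> (r, b1) \<noteq> (a1, b1) \<and> (r, b1) \<noteq> (a2, b2) then -1 else (1::int))
              = slv a1 r"
        using False c tb by (auto simp: prof_def slv_def)
      have s2: "(if prof t (a1, b1) (a2, b2) r b2 \<and> (r, b2) \<noteq> (a1, b1) \<and> (r, b2) \<noteq> (a2, b2) then -1 else (1::int))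
              = tlv a2 r"
        using False c tb by (auto simp: prof_def tlv_def)
      show ?thesis using Mt_cong[OF M] L S False c s1 s2 by (simp add: Fc_def)
    next
      case c: False
      then show ?thesis using L False by (simp add: Fc_def)
    qed
  qed
qed



lemma sum_split4:
  fixes f :: "'a \<Rightarrow> 'a \<Rightarrow> int"
  assumes "finite A" "finite D" "A \<inter> D = {}"
  shows "(\<Sum>(p1,p2)\<in>(A \<union> D) \<times> (A \<union> D). f p1 p2) - (\<Sum>(p1,p2)\<in>A \<times> A. f p1 p2)
       = (\<Sum>p1\<in>A. \<Sum>p2\<in>D. f p1 p2) + (\<Sum>p2\<in>A. \<Sum>p1\<in>D. f p1 p2) + (\<Sum>p1\<in>D. \<Sum>p2\<in>D. f p1 p2)"
proof -
  have e1: "(\<Sum>(p1,p2)\<in>(A \<union> D) \<times> (A \<union> D). f p1 p2) = (\<Sum>p1\<in>A \<union> D. \<Sum>p2\<in>A \<union> D. f p1 p2)"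
    by (simp add: sum.cartesian_product)
  have e2: "(\<Sum>(p1,p2)\<in>A \<times> A. f p1 p2) = (\<Sum>p1\<in>A. \<Sum>p2\<in>A. f p1 p2)"
    by (simp add: sum.cartesian_product)
  have sw: "(\<Sum>p1\<in>D. \<Sum>p2\<in>A. f p1 p2) = (\<Sum>p2\<in>A. \<Sum>p1\<in>D. f p1 p2)"
    by (rule sum.swap)
  show ?thesis unfolding e1 e2 using assms sw
    by (simp add: sum.union_disjoint sum.distrib)
qed

lemma sumD:
  fixes g :: "nat \<times> nat \<Rightarrow> int"
  shows "(\<Sum>p\<in>{0, n+1} \<times> {1..n}. g p) = (\<Sum>j\<in>{1..n}. g (0,j) + g (n+1,j))"
proof -
  have "(\<Sum>p\<in>{0, n+1} \<times> {1..n}. g p) = (\<Sum>i\<in>{0, n+1}. \<Sum>j\<in>{1..n}. g (i,j))"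
    by (simp add: sum.cartesian_product)
  also have "\<dots> = (\<Sum>j\<in>{1..n}. g (0,j)) + (\<Sum>j\<in>{1..n}. g (n+1,j))" by simp
  finally show ?thesis by (simp add: sum.distrib)
qed

lemma sumD':
  fixes g :: "nat \<times> nat \<Rightarrow> int"
  shows "sum g ({0, Suc n} \<times> {Suc 0..n}) = (\<Sum>j\<in>{Suc 0..n}. g (0,j) + g (Suc n,j))"
  using sumD[of g n] by simp

context
  fixes n c r :: nat and xs :: "nat \<Rightarrow> bool"
  assumes c: "c \<in> {1..n}" and r: "r \<in> {1..n}"
begin

abbreviation "Mtop \<equiv> (if \<forall>j\<in>{1..n}. xs j = (j = c) then 1 else (0::int))"

lemma pt_AD:
  assumes "a \<in> {1..n}" "b \<in> {1..n}" "j \<in> {1..n}"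
  shows "Fc n c r xs (a,b) (0,j) + Fc n c r xs (a,b) (n+1,j) = (if j = b then Mtop * (if b = c then slv a r else - slv a r) else 0)"
  using assms c r by (auto simp: Fc_def slv_def tlv_def)

lemma pt_DA:
  assumes "a \<in> {1..n}" "b \<in> {1..n}" "j \<in> {1..n}"
  shows "Fc n c r xs (0,j) (a,b) + Fc n c r xs (n+1,j) (a,b) = (if j = b then Mtop * (if b = c then tlv a r else - tlv a r) else 0)"
  using assms c r by (auto simp: Fc_def slv_def tlv_def)

lemma pt_DD:
  assumes "j1 \<in> {1..n}" "j2 \<in> {1..n}"
  shows "Fc n c r xs (0,j1) (0,j2) + Fc n c r xs (0,j1) (n+1,j2) + (Fc n c r xs (n+1,j1) (0,j2) + Fc n c r xs (n+1,j1) (n+1,j2))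
     = (if j1 = j2 then Mtop * (if j1 = c then -1 else 1) else 0)"
  using assms c r by (auto simp: Fc_def slv_def tlv_def)

lemma count_row:
  assumes A: "A \<subseteq> {1..n} \<times> {1..n}" and T: "card {v \<in> {1..n}. (r, v) \<in> A} = T"
  shows "(\<Sum>p\<in>A. (if snd p = c then 1 else -1) * (if fst p = r then 2 else (0::int)))
        = (if (r,c) \<in> A then 4 else 0) - 2 * int T"
proof -
  have finA: "finite A" using A finite_subset by blast
  have "(\<Sum>p\<in>A. (if snd p = c then 1 else -1) * (if fst p = r then 2 else (0::int)))
      = (\<Sum>p\<in>A. 4 * (if p = (r,c) then 1 else 0) - 2 * (if fst p = r then 1 else (0::int)))"
    by (rule sum.cong) auto
  also have "\<dots> = 4 * (\<Sum>p\<in>A. if p = (r,c) then 1 else 0) - 2 * (\<Sum>p\<in>A. if fst p = r then 1 else (0::int))"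
    by (simp add: sum_subtractf sum_distrib_left)
  also have "(\<Sum>p\<in>A. if p = (r,c) then 1 else (0::int)) = (if (r,c) \<in> A then 1 else 0)"
    using finA by simp
  also have "(\<Sum>p\<in>A. if fst p = r then 1 else (0::int)) = int (card {p\<in>A. fst p = r})"
    using finA by (simp add: sum.If_cases Int_def)
  also have "{p\<in>A. fst p = r} = (\<lambda>v. (r,v)) ` {v \<in> {1..n}. (r, v) \<in> A}"
    using A by force
  also have "card \<dots> = T" using T by (simp add: card_image inj_on_def)
  finally show ?thesis by simp
qed

lemma sum_total:
  assumes A: "A \<subseteq> {1..n} \<times> {1..n}" and T: "card {v \<in> {1..n}. (r, v) \<in> A} = T"
  shows "(\<Sum>(p1,p2)\<in>(A \<union> {0, n+1} \<times> {1..n}) \<times> (A \<union> {0, n+1} \<times> {1..n}). Fc n c r xs p1 p2)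
       - (\<Sum>(p1,p2)\<in>A \<times> A. Fc n c r xs p1 p2)
       = Mtop * (int n - 2 - 2 * int T + (if (r,c) \<in> A then 4 else 0))"
proof -
  let ?D = "{0, n+1} \<times> {1..n}"
  let ?F = "Fc n c r xs"
  have finA: "finite A" using A finite_subset by blast
  have disj: "A \<inter> ?D = {}" using A by auto
  have AD: "(\<Sum>p1\<in>A. \<Sum>p2\<in>?D. ?F p1 p2) = (\<Sum>p\<in>A. Mtop * (if snd p = c then slv (fst p) r else - slv (fst p) r))"
  proof (rule sum.cong)
    fix p assume p: "p \<in> A"
    obtain a b where ab: "p = (a,b)" by force
    have ab': "a \<in> {1..n}" "b \<in> {1..n}" using p ab A by auto
    have "(\<Sum>p2\<in>?D. ?F p p2) = (\<Sum>j\<in>{1..n}. ?F (a,b) (0,j) + ?F (a,b) (n+1,j))"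
      unfolding ab by (rule sumD)
    also have "\<dots> = (\<Sum>j\<in>{1..n}. if j = b then Mtop * (if b = c then slv a r else - slv a r) else 0)"
      by (rule sum.cong) (use pt_AD ab' in auto)
    also have "\<dots> = Mtop * (if b = c then slv a r else - slv a r)" using ab' by simp
    finally show "(\<Sum>p2\<in>?D. ?F p p2) = Mtop * (if snd p = c then slv (fst p) r else - slv (fst p) r)"
      using ab by simp
  qed simp
  have DA: "(\<Sum>p2\<in>A. \<Sum>p1\<in>?D. ?F p1 p2) = (\<Sum>p\<in>A. Mtop * (if snd p = c then tlv (fst p) r else - tlv (fst p) r))"
  proof (rule sum.cong)
    fix p assume p: "p \<in> A"
    obtain a b where ab: "p = (a,b)" by force
    have ab': "a \<in> {1..n}" "b \<in> {1..n}" using p ab A by auto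
    have "(\<Sum>p1\<in>?D. ?F p1 p) = (\<Sum>j\<in>{1..n}. ?F (0,j) (a,b) + ?F (n+1,j) (a,b))"
      unfolding ab by (rule sumD)
    also have "\<dots> = (\<Sum>j\<in>{1..n}. if j = b then Mtop * (if b = c then tlv a r else - tlv a r) else 0)"
      by (rule sum.cong) (use pt_DA ab' in auto)
    also have "\<dots> = Mtop * (if b = c then tlv a r else - tlv a r)" using ab' by simp
    finally show "(\<Sum>p1\<in>?D. ?F p1 p) = Mtop * (if snd p = c then tlv (fst p) r else - tlv (fst p) r)"
      using ab by simp
  qed simp
  have DD: "(\<Sum>p1\<in>?D. \<Sum>p2\<in>?D. ?F p1 p2) = Mtop * (int n - 2)"
  proof -
    have "(\<Sum>p1\<in>?D. \<Sum>p2\<in>?D. ?F p1 p2) = (\<Sum>j1\<in>{1..n}. (\<Sum>p2\<in>?D. ?F (0,j1) p2) + (\<Sum>p2\<in>?D. ?F (n+1,j1) p2))"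
      by (rule sumD)
    also have "\<dots> = (\<Sum>j1\<in>{1..n}. \<Sum>j2\<in>{1..n}. ?F (0,j1) (0,j2) + ?F (0,j1) (n+1,j2) + (?F (n+1,j1) (0,j2) + ?F (n+1,j1) (n+1,j2)))"
      by (simp add: sumD' sum.distrib)
    also have "\<dots> = (\<Sum>j1\<in>{1..n}. \<Sum>j2\<in>{1..n}. if j1 = j2 then Mtop * (if j1 = c then -1 else 1) else 0)"
      by (intro sum.cong refl) (use pt_DD in auto)
    also have "\<dots> = (\<Sum>j1\<in>{1..n}. Mtop * (1 - 2 * (if j1 = c then 1 else 0)))"
      by (intro sum.cong refl) auto
    also have "\<dots> = Mtop * (int n - 2)"
      using c by (simp add: sum_distrib_left[symmetric] sum_subtractf sum_distrib_left)
    finally show ?thesis .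
  qed
  have comb: "(\<Sum>p\<in>A. Mtop * (if snd p = c then slv (fst p) r else - slv (fst p) r))
      + (\<Sum>p\<in>A. Mtop * (if snd p = c then tlv (fst p) r else - tlv (fst p) r))
      = Mtop * (\<Sum>p\<in>A. (if snd p = c then 1 else -1) * (if fst p = r then 2 else (0::int)))"
  proof -
    have pw: "\<And>p. (if snd p = c then slv (fst p) r else - slv (fst p) r) + (if snd p = c then tlv (fst p) r else - tlv (fst p) r)
       = (if snd p = c then 1 else -1) * (if fst p = r then 2 else (0::int))"
      by (auto simp: slv_def tlv_def)
    show ?thesis by (simp add: sum_distrib_left[symmetric] distrib_left[symmetric] sum.distrib[symmetric] pw)
  qed
  have sp: "(\<Sum>(p1,p2)\<in>(A \<union> ?D) \<times> (A \<union> ?D). ?F p1 p2) - (\<Sum>(p1,p2)\<in>A \<times> A. ?F p1 p2)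
       = (\<Sum>p1\<in>A. \<Sum>p2\<in>?D. ?F p1 p2) + (\<Sum>p2\<in>A. \<Sum>p1\<in>?D. ?F p1 p2) + (\<Sum>p1\<in>?D. \<Sum>p2\<in>?D. ?F p1 p2)"
    by (rule sum_split4[OF finA _ disj]) simp
  show ?thesis
    unfolding sp AD DA DD comb count_row[OF A T] by (simp add: algebra_simps)
qed

end



lemma red:
  fixes I :: "'e set" and val :: "'e set \<Rightarrow> int" and P :: "'p set" and C :: "'p \<Rightarrow> 'p \<Rightarrow> 'e set"
  assumes "finite I" "finite P"
    and sub: "\<And>p1 p2. p1 \<in> P \<Longrightarrow> p2 \<in> P \<Longrightarrow> C p1 p2 \<subseteq> I"
    and inj: "\<And>p1 p2 q1 q2. p1 \<in> P \<Longrightarrow> p2 \<in> P \<Longrightarrow> q1 \<in> P \<Longrightarrow> q2 \<in> P \<Longrightarrow> C p1 p2 = C q1 q2 \<Longrightarrow> p1 = q1 \<and> p2 = q2"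
    and key: "\<And>S. S \<subseteq> I \<Longrightarrow> val S \<noteq> 0 \<Longrightarrow> \<exists>p1\<in>P. \<exists>p2\<in>P. S = C p1 p2"
  shows "(\<Sum>S\<in>Pow I. val S) = (\<Sum>(p1,p2)\<in>P \<times> P. val (C p1 p2))"
proof -
  let ?C = "\<lambda>(p1,p2). C p1 p2"
  have "(\<Sum>S\<in>Pow I. val S) = (\<Sum>S\<in>?C ` (P \<times> P). val S)"
  proof (rule sum.mono_neutral_right)
    show "finite (Pow I)" using assms by simp
    show "?C ` (P \<times> P) \<subseteq> Pow I" using sub by auto
    show "\<forall>S\<in>Pow I - ?C ` (P \<times> P). val S = 0"
    proof
      fix S assume S: "S \<in> Pow I - ?C ` (P \<times> P)"
      show "val S = 0"
      proof (rule ccontr)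
        assume "val S \<noteq> 0"
        then obtain p1 p2 where "p1 \<in> P" "p2 \<in> P" "S = C p1 p2" using key S by blast
        then show False using S by force
      qed
    qed
  qed
  also have "\<dots> = (\<Sum>p\<in>P \<times> P. val (?C p))"
  proof (rule sum.reindex[unfolded comp_def])
    show "inj_on ?C (P \<times> P)"
    proof (rule inj_onI)
      fix p q assume "p \<in> P \<times> P" "q \<in> P \<times> P" "?C p = ?C q"
      then show "p = q" using inj[of "fst p" "snd p" "fst q" "snd q"] by (cases p; cases q) auto
    qed
  qed
  also have "\<dots> = (\<Sum>(p1,p2)\<in>P \<times> P. val (C p1 p2))"
    by (rule sum.cong) auto
  finally show ?thesis .
qed

definition topf :: "bool list \<Rightarrow> nat \<Rightarrow> bool" where "topf x j = x ! (j - 1)"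
definition xWf :: "nat \<Rightarrow> bool list \<Rightarrow> nat \<Rightarrow> bool" where "xWf n x i = x ! (3*n + i - 1)"
definition xEf :: "nat \<Rightarrow> bool list \<Rightarrow> nat \<Rightarrow> bool" where "xEf n x i = x ! (n + i - 1)"
definition xSf :: "nat \<Rightarrow> bool list \<Rightarrow> nat \<Rightarrow> bool" where "xSf n x j = x ! (2*n + j - 1)"

lemma HW1_pick:
  assumes "HW1 Q \<sigma> \<noteq> 0"
  obtains e0 where "e0 \<in> Q" "\<And>e. e \<in> Q \<Longrightarrow> \<sigma> e = (e = e0)"
proof -
  have "card {e \<in> Q. \<sigma> e} = 1" using assms by (simp add: HW1_def split: if_splits)
  then obtain e0 where "{e \<in> Q. \<sigma> e} = {e0}" by (rule card_1_singletonE)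
  then show ?thesis using that by blast
qed

lemma prod_nz: "finite V \<Longrightarrow> (\<Prod>v\<in>V. f v) \<noteq> (0::int) \<Longrightarrow> v \<in> V \<Longrightarrow> f v \<noteq> 0"
  by (simp add: prod_zero_iff)



definition sigG :: "nat \<Rightarrow> (nat \<times> nat) set \<Rightarrow> bool list \<Rightarrow> edge set \<Rightarrow> edge \<Rightarrow> bool" where
  "sigG n A x S = (\<lambda>e. if e \<in> internalG n A then e \<in> S else dangling n 1 (n+1) x e)"

definition CG :: "nat \<Rightarrow> bool list \<Rightarrow> nat \<times> nat \<Rightarrow> nat \<times> nat \<Rightarrow> edge set" where
  "CG n x p1 p2 = {VE i j | i j. i \<in> {2..n} \<and> j \<in> {1..n} \<and> prof (topf x) p1 p2 i j}
     \<union> {HE i j | i j. i \<in> {1..n} \<and> j \<in> {2..n} \<and> xWf n x i}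
     \<union> {AE 1 (fst p1) (snd p1), AE 2 (fst p2) (snd p2)}"

lemma inG_VE[simp]: "VE i j \<in> internalG n A \<longleftrightarrow> i \<in> {2..n} \<and> j \<in> {1..n}"
  by (auto simp: internalG_def apexG_def)
lemma inG_HE[simp]: "HE i j \<in> internalG n A \<longleftrightarrow> i \<in> {1..n} \<and> j \<in> {2..n}"
  by (auto simp: internalG_def apexG_def)
lemma inG_AE[simp]: "AE k i j \<in> internalG n A \<longleftrightarrow> (k = 1 \<or> k = 2) \<and> (i,j) \<in> A"
  by (auto simp: internalG_def apexG_def)

lemma in_apexG[simp]: "e \<in> apexG k A \<longleftrightarrow> (\<exists>i j. e = AE k i j \<and> (i,j) \<in> A)"
  by (auto simp: apexG_def)

lemma inCG_VE[simp]: "VE i j \<in> CG n x p1 p2 \<longleftrightarrow> i \<in> {2..n} \<and> j \<in> {1..n} \<and> prof (topf x) p1 p2 i j"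
  by (auto simp: CG_def)
lemma inCG_HE[simp]: "HE i j \<in> CG n x p1 p2 \<longleftrightarrow> i \<in> {1..n} \<and> j \<in> {2..n} \<and> xWf n x i"
  by (auto simp: CG_def)
lemma inCG_AE[simp]: "AE k i j \<in> CG n x p1 p2 \<longleftrightarrow> (k = 1 \<and> (i,j) = p1) \<or> (k = 2 \<and> (i,j) = p2)"
  by (cases p1; cases p2) (auto simp: CG_def)

lemma fin_internalG: "finite A \<Longrightarrow> finite (internalG n A)"
proof -
  assume fA: "finite A"
  have "internalG n A \<subseteq> (\<lambda>(i,j). VE i j) ` ({2..n}\<times>{1..n}) \<union> (\<lambda>(i,j). HE i j) ` ({1..n}\<times>{2..n})
      \<union> (\<lambda>(i,j). AE 1 i j) ` A \<union> (\<lambda>(i,j). AE 2 i j) ` A"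
  proof
    fix e assume "e \<in> internalG n A"
    then show "e \<in> (\<lambda>(i,j). VE i j) ` ({2..n}\<times>{1..n}) \<union> (\<lambda>(i,j). HE i j) ` ({1..n}\<times>{2..n})
      \<union> (\<lambda>(i,j). AE 1 i j) ` A \<union> (\<lambda>(i,j). AE 2 i j) ` A"
      by (cases e) (auto simp: image_iff; force)+
  qed
  then show ?thesis by (rule finite_subset) (use fA in auto)
qed

lemma CG_sub: "p1 \<in> A \<Longrightarrow> p2 \<in> A \<Longrightarrow> CG n x p1 p2 \<subseteq> internalG n A"
proof
  fix e assume "p1 \<in> A" "p2 \<in> A" "e \<in> CG n x p1 p2"
  then show "e \<in> internalG n A" by (cases e) auto
qed

lemma CG_inj: "CG n x p1 p2 = CG n x q1 q2 \<Longrightarrow> p1 = q1 \<and> p2 = q2"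
proof -
  assume eq: "CG n x p1 p2 = CG n x q1 q2"
  have "AE 1 (fst p1) (snd p1) \<in> CG n x q1 q2" "AE 2 (fst p2) (snd p2) \<in> CG n x q1 q2"
    using eq[symmetric] by simp_all
  then show ?thesis by simp
qed



lemma propG:
  assumes A: "A \<subseteq> {1..n} \<times> {1..n}" and S: "S \<subseteq> internalG n A"
    and nz: "valG n A (sigG n A x S) \<noteq> 0"
  shows "(\<exists>p1\<in>A. \<exists>p2\<in>A. S = CG n x p1 p2) \<and> (\<forall>i\<in>{1..n}. xWf n x i = xEf n x i)"
proof -
  let ?\<sigma> = "sigG n A x S"
  have fA: "finite A" using A finite_subset by blast
  have g: "grid_val n A ?\<sigma> \<noteq> 0" and h1: "HW1 (apexG 1 A) ?\<sigma> \<noteq> 0" and h2: "HW1 (apexG 2 A) ?\<sigma> \<noteq> 0"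
    using nz by (auto simp: valG_def)
  have apex: "\<exists>p\<in>A. \<forall>i j. ?\<sigma> (AE k i j) = ((i,j) = p)"
    if k: "k = 1 \<or> k = 2" and hk: "HW1 (apexG k A) ?\<sigma> \<noteq> 0" for k
  proof -
    obtain e0 where e0: "e0 \<in> apexG k A" "\<And>e. e \<in> apexG k A \<Longrightarrow> ?\<sigma> e = (e = e0)"
      using HW1_pick[OF hk] by blast
    then obtain a b where ab: "e0 = AE k a b" "(a,b) \<in> A" by auto
    show ?thesis
    proof (intro bexI[of _ "(a,b)"] allI)
      fix i j
      show "?\<sigma> (AE k i j) = ((i,j) = (a,b))"
      proof (cases "(i,j) \<in> A")
        case True then have "AE k i j \<in> apexG k A" by auto
        then show ?thesis using e0(2) ab by auto
      next
        case False then show ?thesis using k ab by (auto simp: sigG_def dangling_def)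
      qed
    qed (rule ab(2))
  qed
  obtain p1 where p1: "p1 \<in> A" "\<And>i j. ?\<sigma> (AE 1 i j) = ((i,j) = p1)" using apex[of 1] h1 by auto
  obtain p2 where p2: "p2 \<in> A" "\<And>i j. ?\<sigma> (AE 2 i j) = ((i,j) = p2)" using apex[of 2] h2 by auto
  have p1': "\<And>i j. ?\<sigma> (AE (Suc 0) i j) = ((i,j) = p1)" using p1(2) by simp
  have fac: "PRE (?\<sigma> (VE i j)) (?\<sigma> (HE i (j+1))) (?\<sigma> (VE (i+1) j)) (?\<sigma> (HE i j)) ((i,j)=p1) ((i,j)=p2) \<noteq> 0"
    if ij: "i \<in> {1..n}" "j \<in> {1..n}" for i j
  proof -
    have "(\<lambda>(i,j). if (i,j) \<in> A
      then PRE (?\<sigma> (VE i j)) (?\<sigma> (HE i (j+1))) (?\<sigma> (VE (i+1) j)) (?\<sigma> (HE i j)) (?\<sigma> (AE 1 i j)) (?\<sigma> (AE 2 i j))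
      else PASS (?\<sigma> (VE i j)) (?\<sigma> (HE i (j+1))) (?\<sigma> (VE (i+1) j)) (?\<sigma> (HE i j))) (i,j) \<noteq> 0" (is "?fct \<noteq> 0")
      by (rule prod_nz[OF _ g[unfolded grid_val_def]]) (use ij in auto)
    then show ?thesis
    proof (cases "(i,j) \<in> A")
      case False
      then have "(i,j) \<noteq> p1" "(i,j) \<noteq> p2" using p1(1) p2(1) by auto
      then show ?thesis using False \<open>?fct \<noteq> 0\<close> by (simp add: PASS_PRE)
    qed (simp add: p1 p1' p2)
  qed
  have V: "?\<sigma> (VE (Suc i) j) = step (?\<sigma> (VE i j)) ((i,j)=p1) ((i,j)=p2)"
    and H: "?\<sigma> (HE i (Suc j)) = ?\<sigma> (HE i j)" if "i \<in> {1..n}" "j \<in> {1..n}" for i j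
    using PRE_nz[OF fac[OF that]] by auto
  have rows: "fst p1 \<ge> 1" "fst p2 \<ge> 1" using p1 p2 A by auto
  have vert: "?\<sigma> (VE (Suc k) j) = prof (topf x) p1 p2 (Suc k) j" if "k \<le> n" "j \<in> {1..n}" for k j
    using that(1)
  proof (induction k)
    case 0
    have "?\<sigma> (VE 1 j) = topf x j" by (simp add: sigG_def dangling_def topf_def)
    then show ?case using prof_low[of 1 p1 p2] rows by simp
  next
    case (Suc k)
    then have "?\<sigma> (VE (Suc k) j) = prof (topf x) p1 p2 (Suc k) j" by simp
    then show ?case using V[of "Suc k" j] Suc.prems that(2) by (simp add: prof_Suc)
  qed
  have horiz: "?\<sigma> (HE i (Suc k)) = xWf n x i" if "k \<le> n" "i \<in> {1..n}" for k i
    using that(1)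
  proof (induction k)
    case 0
    show ?case using that(2) by (simp add: sigG_def dangling_def xWf_def)
  next
    case (Suc k)
    then show ?case using H[of i "Suc k"] that(2) by simp
  qed
  have WE: "\<forall>i\<in>{1..n}. xWf n x i = xEf n x i"
  proof
    fix i assume i: "i \<in> {1..n}"
    have "?\<sigma> (HE i (Suc n)) = xEf n x i" by (simp add: sigG_def dangling_def xEf_def)
    then show "xWf n x i = xEf n x i" using horiz[of n i] i by simp
  qed
  have "S = CG n x p1 p2"
  proof (rule set_eqI)
    fix e
    show "e \<in> S \<longleftrightarrow> e \<in> CG n x p1 p2"
    proof (cases "e \<in> internalG n A")
      case False
      then have "e \<notin> S" using S by auto
      moreover have "e \<notin> CG n x p1 p2" using False CG_sub[OF p1(1) p2(1)] by auto
      ultimately show ?thesis by simp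
    next
      case True
      then have eS: "e \<in> S \<longleftrightarrow> ?\<sigma> e" by (simp add: sigG_def)
      show ?thesis
      proof (cases e)
        case (VE i j)
        then have ij: "i \<in> {2..n}" "j \<in> {1..n}" using True by auto
        then have "?\<sigma> (VE (Suc (i - 1)) j) = prof (topf x) p1 p2 (Suc (i - 1)) j" by (intro vert) auto
        then show ?thesis using eS VE ij by simp
      next
        case (HE i j)
        then have ij: "i \<in> {1..n}" "j \<in> {2..n}" using True by auto
        then have "?\<sigma> (HE i (Suc (j - 1))) = xWf n x i" by (intro horiz) auto
        then show ?thesis using eS HE ij by simp
      next
        case (AE k i j)
        then have "k = 1 \<or> k = 2" using True by auto
        then show ?thesis using eS AE p1 p1' p2 by auto
      qed
    qed
  qed
  then show ?thesis using WE p1(1) p2(1) by blast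
qed



lemma valG_C:
  assumes A: "A \<subseteq> {1..n} \<times> {1..n}" and p1: "p1 \<in> A" and p2: "p2 \<in> A"
    and WE: "\<forall>i\<in>{1..n}. xWf n x i = xEf n x i" and Wr: "\<forall>i\<in>{1..n}. xWf n x i = (i = r)"
    and r: "r \<in> {1..n}"
  shows "valG n A (sigG n A x (CG n x p1 p2)) =
     (if \<forall>j\<in>{1..n}. xSf n x j = prof (topf x) p1 p2 (Suc n) j then 1 else 0) * legal (topf x) p1 p2 * sgnr (topf x) n r p1 p2"
proof -
  let ?\<sigma> = "sigG n A x (CG n x p1 p2)"
  let ?p = "prof (topf x) p1 p2"
  have n1: "n \<ge> 1" using r by auto
  have rows: "fst p1 \<ge> 1" "fst p2 \<ge> 1" using p1 p2 A by auto
  have sV: "?\<sigma> (VE i j) = (if i = n+1 then xSf n x j else ?p i j)" if ij: "i \<in> {1..n+1}" "j \<in> {1..n}" for i j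
  proof -
    consider "i = 1" | "i \<in> {2..n}" | "i = n+1" using ij by force
    then show ?thesis
    proof cases
      case 1
      then show ?thesis using n1 prof_low[of 1 p1 p2] rows
        by (simp add: sigG_def dangling_def topf_def)
    next
      case 2
      then show ?thesis using ij by (simp add: sigG_def)
    next
      case 3
      then show ?thesis using n1 by (simp add: sigG_def dangling_def xSf_def)
    qed
  qed
  have sH: "?\<sigma> (HE i j) = (i = r)" if ij: "i \<in> {1..n}" "j \<in> {1..n+1}" for i j
  proof -
    consider "j = 1" | "j \<in> {2..n}" | "j = n+1" using ij by force
    then show ?thesis
    proof cases
      case 1
      then show ?thesis using n1 ij Wr by (simp add: sigG_def dangling_def xWf_def)
    next
      case 2
      then show ?thesis using ij Wr by (simp add: sigG_def)
    next
      case 3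
      then show ?thesis using n1 ij Wr WE by (simp add: sigG_def dangling_def xEf_def)
    qed
  qed
  have sA1: "?\<sigma> (AE 1 i j) = ((i,j) = p1)" for i j
    using p1 p2 by (cases "(i,j) \<in> A") (auto simp: sigG_def dangling_def)
  have sA2: "?\<sigma> (AE 2 i j) = ((i,j) = p2)" for i j
    using p1 p2 by (cases "(i,j) \<in> A") (auto simp: sigG_def dangling_def)
  have HWk: "HW1 (apexG k A) ?\<sigma> = 1" if "k = 1 \<or> k = 2" "pk \<in> A" "\<And>i j. ?\<sigma> (AE k i j) = ((i,j) = pk)" for k pk
  proof -
    have "{e \<in> apexG k A. ?\<sigma> e} = {AE k (fst pk) (snd pk)}"
      using that by (cases pk) auto
    then show ?thesis by (simp add: HW1_def)
  qed
  have grid: "grid_val n A ?\<sigma> = (\<Prod>(i,j)\<in>{1..n} \<times> {1..n}. PRE (?p i j) (i = r)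
            (if i = n then xSf n x j else ?p (Suc i) j) (i = r) ((i,j) = p1) ((i,j) = p2))"
    unfolding grid_val_def
  proof (rule prod.cong[OF refl])
    fix v assume v: "v \<in> {1..n} \<times> {1..n}"
    obtain i j where ij: "v = (i,j)" by force
    have ij': "i \<in> {1..n}" "j \<in> {1..n}" using v ij by auto
    have e1: "?\<sigma> (VE i j) = ?p i j" using sV[of i j] ij' by auto
    have e2: "?\<sigma> (VE (i+1) j) = (if i = n then xSf n x j else ?p (Suc i) j)" using sV[of "i+1" j] ij' by auto
    have e3: "?\<sigma> (HE i (j+1)) = (i = r)" "?\<sigma> (HE i j) = (i = r)" using sH ij' by auto
    have e4: "(i,j) \<notin> A \<Longrightarrow> (i,j) \<noteq> p1 \<and> (i,j) \<noteq> p2" using p1 p2 by auto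
    show "(case v of (i,j) \<Rightarrow> if (i, j) \<in> A
             then PRE (?\<sigma> (VE i j)) (?\<sigma> (HE i (j + 1))) (?\<sigma> (VE (i + 1) j)) (?\<sigma> (HE i j)) (?\<sigma> (AE 1 i j)) (?\<sigma> (AE 2 i j))
             else PASS (?\<sigma> (VE i j)) (?\<sigma> (HE i (j + 1))) (?\<sigma> (VE (i + 1) j)) (?\<sigma> (HE i j))) =
          (case v of (i,j) \<Rightarrow> PRE (?p i j) (i = r)
            (if i = n then xSf n x j else ?p (Suc i) j) (i = r) ((i,j) = p1) ((i,j) = p2))"
      unfolding ij using e1 e2 e3 e4 sA1 sA2 by (auto simp: PASS_PRE simp del: One_nat_def)
  qed
  have "grid_val n A ?\<sigma> = (if \<forall>j\<in>{1..n}. xSf n x j = ?p (Suc n) j then 1 else 0) * legal (topf x) p1 p2 * sgnr (topf x) n r p1 p2"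
    unfolding grid by (rule PF) (use p1 p2 A r in auto)
  moreover have "HW1 (apexG 1 A) ?\<sigma> = 1" by (rule HWk) (use p1 sA1 in auto)
  moreover have "HW1 (apexG 2 A) ?\<sigma> = 1" by (rule HWk) (use p2 sA2 in auto)
  ultimately show ?thesis by (simp add: valG_def)
qed



lemma SigG_eq:
  assumes A: "A \<subseteq> {1..n} \<times> {1..n}"
    and WE: "\<forall>i\<in>{1..n}. xWf n x i = xEf n x i" and Wr: "\<forall>i\<in>{1..n}. xWf n x i = (i = r)"
    and r: "r \<in> {1..n}" and tc: "\<forall>j\<in>{1..n}. topf x j = (j = c)" and c: "c \<in> {1..n}"
  shows "SigG n A x = (\<Sum>(p1,p2)\<in>A \<times> A. Fc n c r (xSf n x) p1 p2)"
proof -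
  have fA: "finite A" using A finite_subset by blast
  have "SigG n A x = (\<Sum>S\<in>Pow (internalG n A). valG n A (sigG n A x S))"
    by (simp add: SigG_def sigG_def)
  also have "\<dots> = (\<Sum>(p1,p2)\<in>A \<times> A. valG n A (sigG n A x (CG n x p1 p2)))"
  proof (rule red)
    show "finite (internalG n A)" using fin_internalG[OF fA] .
  next
    show "finite A" by (rule fA)
  next
    fix p1 p2 assume "p1 \<in> A" "p2 \<in> A" then show "CG n x p1 p2 \<subseteq> internalG n A" by (rule CG_sub)
  next
    fix p1 p2 q1 q2 assume "CG n x p1 p2 = CG n x q1 q2" then show "p1 = q1 \<and> p2 = q2" by (rule CG_inj)
  next
    fix S assume "S \<subseteq> internalG n A" "valG n A (sigG n A x S) \<noteq> 0"
    then show "\<exists>p1\<in>A. \<exists>p2\<in>A. S = CG n x p1 p2" using propG[OF A] by blast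
  qed
  also have "\<dots> = (\<Sum>(p1,p2)\<in>A \<times> A. Fc n c r (xSf n x) p1 p2)"
  proof (rule sum.cong[OF refl])
    fix p assume p: "p \<in> A \<times> A"
    obtain a1 b1 a2 b2 where pe: "p = ((a1,b1),(a2,b2))" by (cases p) force
    have m: "(a1,b1) \<in> A" "(a2,b2) \<in> A" using p pe by auto
    then have b: "b1 \<in> {1..n}" "b2 \<in> {1..n}" "a1 < Suc n" "a2 < Suc n" using A by auto
    show "(case p of (p1,p2) \<Rightarrow> valG n A (sigG n A x (CG n x p1 p2))) = (case p of (p1,p2) \<Rightarrow> Fc n c r (xSf n x) p1 p2)"
      unfolding pe using valG_C[OF A m WE Wr r] Fc_eq[OF b(1,2) tc c b(3,4)] by simp
  qed
  finally show ?thesis .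
qed

lemma SigG_zero:
  assumes A: "A \<subseteq> {1..n} \<times> {1..n}" and nWE: "\<not> (\<forall>i\<in>{1..n}. xWf n x i = xEf n x i)"
  shows "SigG n A x = 0"
  unfolding SigG_def
proof (rule sum.neutral, rule ballI)
  fix S assume "S \<in> Pow (internalG n A)"
  then have S: "S \<subseteq> internalG n A" by simp
  show "valG n A (\<lambda>e. if e \<in> internalG n A then e \<in> S else dangling n 1 (n + 1) x e) = 0"
  proof (rule ccontr)
    assume "valG n A (\<lambda>e. if e \<in> internalG n A then e \<in> S else dangling n 1 (n + 1) x e) \<noteq> 0"
    then show False using propG[OF A S, of x] nWE unfolding sigG_def by blast
  qed
qed



definition sigU :: "nat \<Rightarrow> (nat \<times> nat) set \<Rightarrow> bool list \<Rightarrow> edge set \<Rightarrow> edge \<Rightarrow> bool" where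
  "sigU n A x S = (\<lambda>e. if e \<in> internalU n A then e \<in> S else dangling n 0 (n+2) x e)"

definition CU :: "nat \<Rightarrow> bool list \<Rightarrow> nat \<times> nat \<Rightarrow> nat \<times> nat \<Rightarrow> edge set" where
  "CU n x p1 p2 = {VE i j | i j. i \<in> {1..n+1} \<and> j \<in> {1..n} \<and> prof (topf x) p1 p2 i j}
     \<union> {HE i j | i j. i \<in> {1..n} \<and> j \<in> {2..n} \<and> xWf n x i}
     \<union> {AE 1 (fst p1) (snd p1), AE 2 (fst p2) (snd p2)}"

abbreviation PU :: "nat \<Rightarrow> (nat \<times> nat) set \<Rightarrow> (nat \<times> nat) set" where
  "PU n A \<equiv> A \<union> {0, n+1} \<times> {1..n}"

lemma inU_VE[simp]: "VE i j \<in> internalU n A \<longleftrightarrow> i \<in> {1..n+1} \<and> j \<in> {1..n}"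
  by (auto simp: internalU_def apexU_def)
lemma inU_HE[simp]: "HE i j \<in> internalU n A \<longleftrightarrow> i \<in> {1..n} \<and> j \<in> {2..n}"
  by (auto simp: internalU_def apexU_def)
lemma inU_AE[simp]: "AE k i j \<in> internalU n A \<longleftrightarrow> (k = 1 \<or> k = 2) \<and> (i,j) \<in> PU n A"
  by (auto simp: internalU_def apexU_def)

lemma in_apexU[simp]: "e \<in> apexU n k A \<longleftrightarrow> (\<exists>i j. e = AE k i j \<and> (i,j) \<in> PU n A)"
  by (auto simp: apexU_def)

lemma inCU_VE[simp]: "VE i j \<in> CU n x p1 p2 \<longleftrightarrow> i \<in> {1..n+1} \<and> j \<in> {1..n} \<and> prof (topf x) p1 p2 i j"
  by (auto simp: CU_def)
lemma inCU_HE[simp]: "HE i j \<in> CU n x p1 p2 \<longleftrightarrow> i \<in> {1..n} \<and> j \<in> {2..n} \<and> xWf n x i"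
  by (auto simp: CU_def)
lemma inCU_AE[simp]: "AE k i j \<in> CU n x p1 p2 \<longleftrightarrow> (k = 1 \<and> (i,j) = p1) \<or> (k = 2 \<and> (i,j) = p2)"
  by (cases p1; cases p2) (auto simp: CU_def)

lemma fin_internalU: "finite A \<Longrightarrow> finite (internalU n A)"
proof -
  assume fA: "finite A"
  let ?P = "PU n A"
  have "internalU n A \<subseteq> (\<lambda>(i,j). VE i j) ` ({1..n+1}\<times>{1..n}) \<union> (\<lambda>(i,j). HE i j) ` ({1..n}\<times>{2..n})
      \<union> (\<lambda>(i,j). AE 1 i j) ` ?P \<union> (\<lambda>(i,j). AE 2 i j) ` ?P"
  proof
    fix e assume "e \<in> internalU n A"
    then show "e \<in> (\<lambda>(i,j). VE i j) ` ({1..n+1}\<times>{1..n}) \<union> (\<lambda>(i,j). HE i j) ` ({1..n}\<times>{2..n})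
      \<union> (\<lambda>(i,j). AE 1 i j) ` ?P \<union> (\<lambda>(i,j). AE 2 i j) ` ?P"
      by (cases e) (auto simp: image_iff; force)+
  qed
  then show ?thesis by (rule finite_subset) (use fA in auto)
qed

lemma CU_sub: "p1 \<in> PU n A \<Longrightarrow> p2 \<in> PU n A \<Longrightarrow> CU n x p1 p2 \<subseteq> internalU n A"
proof
  fix e assume "p1 \<in> PU n A" "p2 \<in> PU n A" "e \<in> CU n x p1 p2"
  then show "e \<in> internalU n A" by (cases e) auto
qed

lemma CU_inj: "CU n x p1 p2 = CU n x q1 q2 \<Longrightarrow> p1 = q1 \<and> p2 = q2"
proof -
  assume eq: "CU n x p1 p2 = CU n x q1 q2"
  have "AE 1 (fst p1) (snd p1) \<in> CU n x q1 q2" "AE 2 (fst p2) (snd p2) \<in> CU n x q1 q2"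
    using eq[symmetric] by simp_all
  then show ?thesis by simp
qed



lemma propU:
  assumes A: "A \<subseteq> {1..n} \<times> {1..n}" and S: "S \<subseteq> internalU n A"
    and nz: "valU n A (sigU n A x S) \<noteq> 0"
  shows "(\<exists>p1\<in>PU n A. \<exists>p2\<in>PU n A. S = CU n x p1 p2) \<and> (\<forall>i\<in>{1..n}. xWf n x i = xEf n x i)"
proof -
  let ?\<sigma> = "sigU n A x S"
  have fA: "finite A" using A finite_subset by blast
  have g: "grid_val n A ?\<sigma> \<noteq> 0" and d: "dummy_val n ?\<sigma> \<noteq> 0"
    and h1: "HW1 (apexU n 1 A) ?\<sigma> \<noteq> 0" and h2: "HW1 (apexU n 2 A) ?\<sigma> \<noteq> 0"
    using nz by (auto simp: valU_def)
  have apex: "\<exists>p\<in>PU n A. \<forall>i j. ?\<sigma> (AE k i j) = ((i,j) = p)"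
    if k: "k = 1 \<or> k = 2" and hk: "HW1 (apexU n k A) ?\<sigma> \<noteq> 0" for k
  proof -
    obtain e0 where e0: "e0 \<in> apexU n k A" "\<And>e. e \<in> apexU n k A \<Longrightarrow> ?\<sigma> e = (e = e0)"
      using HW1_pick[OF hk] by blast
    then obtain a b where ab: "e0 = AE k a b" "(a,b) \<in> PU n A" by auto
    show ?thesis
    proof (intro bexI[of _ "(a,b)"] allI)
      fix i j
      show "?\<sigma> (AE k i j) = ((i,j) = (a,b))"
      proof (cases "(i,j) \<in> PU n A")
        case True then have "AE k i j \<in> apexU n k A" by auto
        then show ?thesis using e0(2) ab by auto
      next
        case False then show ?thesis using k ab by (auto simp: sigU_def dangling_def)
      qed
    qed (rule ab(2))
  qed
  obtain p1 where p1: "p1 \<in> PU n A" "\<And>i j. ?\<sigma> (AE 1 i j) = ((i,j) = p1)" using apex[of 1] h1 by auto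
  obtain p2 where p2: "p2 \<in> PU n A" "\<And>i j. ?\<sigma> (AE 2 i j) = ((i,j) = p2)" using apex[of 2] h2 by auto
  have p1': "\<And>i j. ?\<sigma> (AE (Suc 0) i j) = ((i,j) = p1)" using p1(2) by simp
  have fac: "PRE (?\<sigma> (VE i j)) (?\<sigma> (HE i (j+1))) (?\<sigma> (VE (i+1) j)) (?\<sigma> (HE i j)) ((i,j)=p1) ((i,j)=p2) \<noteq> 0"
    if ij: "i \<in> {1..n}" "j \<in> {1..n}" for i j
  proof -
    have "(\<lambda>(i,j). if (i,j) \<in> A
      then PRE (?\<sigma> (VE i j)) (?\<sigma> (HE i (j+1))) (?\<sigma> (VE (i+1) j)) (?\<sigma> (HE i j)) (?\<sigma> (AE 1 i j)) (?\<sigma> (AE 2 i j))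
      else PASS (?\<sigma> (VE i j)) (?\<sigma> (HE i (j+1))) (?\<sigma> (VE (i+1) j)) (?\<sigma> (HE i j))) (i,j) \<noteq> 0" (is "?fct \<noteq> 0")
      by (rule prod_nz[OF _ g[unfolded grid_val_def]]) (use ij in auto)
    then show ?thesis
    proof (cases "(i,j) \<in> A")
      case False
      then have "(i,j) \<noteq> p1" "(i,j) \<noteq> p2" using p1(1) p2(1) ij by auto
      then show ?thesis using False \<open>?fct \<noteq> 0\<close> by (simp add: PASS_PRE)
    qed (simp add: p1 p1' p2)
  qed
  have facd: "PRE (?\<sigma> (VE i j)) False (?\<sigma> (VE (i+1) j)) False ((i,j)=p1) ((i,j)=p2) \<noteq> 0"
    if ij: "i \<in> {0, n+1}" "j \<in> {1..n}" for i j
  proof -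
    have "(\<lambda>(i,j). hsig (?\<sigma> (VE i j)) (?\<sigma> (VE (i+1) j)) (?\<sigma> (AE 1 i j)) (?\<sigma> (AE 2 i j))) (i,j) \<noteq> 0"
      by (rule prod_nz[OF _ d[unfolded dummy_val_def]]) (use ij in auto)
    then show ?thesis by (simp add: hsig_def p1 p1' p2)
  qed
  have V: "?\<sigma> (VE (Suc i) j) = step (?\<sigma> (VE i j)) ((i,j)=p1) ((i,j)=p2)"
    if "i \<in> {0..n+1}" "j \<in> {1..n}" for i j
  proof (cases "i \<in> {1..n}")
    case True
    then show ?thesis using PRE_nz[OF fac[OF True that(2)]] by auto
  next
    case False
    then have "i \<in> {0, n+1}" using that by auto
    then show ?thesis using PRE_nz[OF facd[OF _ that(2)]] by auto
  qed
  have H: "?\<sigma> (HE i (Suc j)) = ?\<sigma> (HE i j)" if "i \<in> {1..n}" "j \<in> {1..n}" for i j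
    using PRE_nz[OF fac[OF that]] by auto
  have vert: "?\<sigma> (VE k j) = prof (topf x) p1 p2 k j" if "k \<le> n + 2" "j \<in> {1..n}" for k j
    using that(1)
  proof (induction k)
    case 0
    have "?\<sigma> (VE 0 j) = topf x j" by (simp add: sigU_def dangling_def topf_def)
    then show ?case using prof_low[of 0 p1 p2] by simp
  next
    case (Suc k)
    then have "?\<sigma> (VE k j) = prof (topf x) p1 p2 k j" by simp
    then show ?case using V[of k j] Suc.prems that(2) by (simp add: prof_Suc)
  qed
  have horiz: "?\<sigma> (HE i (Suc k)) = xWf n x i" if "k \<le> n" "i \<in> {1..n}" for k i
    using that(1)
  proof (induction k)
    case 0
    show ?case using that(2) by (simp add: sigU_def dangling_def xWf_def)
  next
    case (Suc k)
    then show ?case using H[of i "Suc k"] that(2) by simp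
  qed
  have WE: "\<forall>i\<in>{1..n}. xWf n x i = xEf n x i"
  proof
    fix i assume i: "i \<in> {1..n}"
    have "?\<sigma> (HE i (Suc n)) = xEf n x i" by (simp add: sigU_def dangling_def xEf_def)
    then show "xWf n x i = xEf n x i" using horiz[of n i] i by simp
  qed
  have "S = CU n x p1 p2"
  proof (rule set_eqI)
    fix e
    show "e \<in> S \<longleftrightarrow> e \<in> CU n x p1 p2"
    proof (cases "e \<in> internalU n A")
      case False
      then have "e \<notin> S" using S by auto
      moreover have "e \<notin> CU n x p1 p2" using False CU_sub[OF p1(1) p2(1)] by auto
      ultimately show ?thesis by simp
    next
      case True
      then have eS: "e \<in> S \<longleftrightarrow> ?\<sigma> e" by (simp add: sigU_def)
      show ?thesis
      proof (cases e)
        case (VE i j)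
        then have ij: "i \<in> {1..n+1}" "j \<in> {1..n}" using True by auto
        then have "?\<sigma> (VE i j) = prof (topf x) p1 p2 i j" by (intro vert) auto
        then show ?thesis using eS VE ij by simp
      next
        case (HE i j)
        then have ij: "i \<in> {1..n}" "j \<in> {2..n}" using True by auto
        then have "?\<sigma> (HE i (Suc (j - 1))) = xWf n x i" by (intro horiz) auto
        then show ?thesis using eS HE ij by simp
      next
        case (AE k i j)
        then have "k = 1 \<or> k = 2" using True by auto
        then show ?thesis using eS AE p1 p1' p2 by auto
      qed
    qed
  qed
  then show ?thesis using WE p1(1) p2(1) by blast
qed



lemma valU_C:
  assumes A: "A \<subseteq> {1..n} \<times> {1..n}" and p1: "p1 \<in> PU n A" and p2: "p2 \<in> PU n A"
    and WE: "\<forall>i\<in>{1..n}. xWf n x i = xEf n x i" and Wr: "\<forall>i\<in>{1..n}. xWf n x i = (i = r)"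
    and r: "r \<in> {1..n}"
  shows "valU n A (sigU n A x (CU n x p1 p2)) =
     (if \<forall>j\<in>{1..n}. xSf n x j = prof (topf x) p1 p2 (Suc (n+1)) j then 1 else 0) * legal (topf x) p1 p2 * sgnr (topf x) n r p1 p2"
proof -
  let ?\<sigma> = "sigU n A x (CU n x p1 p2)"
  let ?p = "prof (topf x) p1 p2"
  let ?f = "\<lambda>(i,j). PRE (?p i j) (i = r)
            (if i = n+1 then xSf n x j else ?p (Suc i) j) (i = r) ((i,j) = p1) ((i,j) = p2)"
  have n1: "n \<ge> 1" using r by auto
  have sV: "?\<sigma> (VE i j) = (if i = n+2 then xSf n x j else ?p i j)" if ij: "i \<in> {0..n+2}" "j \<in> {1..n}" for i j
  proof -
    consider "i = 0" | "i \<in> {1..n+1}" | "i = n+2" using ij by force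
    then show ?thesis
    proof cases
      case 1
      then show ?thesis using prof_low[of 0 p1 p2] by (simp add: sigU_def dangling_def topf_def)
    next
      case 2
      then show ?thesis using ij by (simp add: sigU_def)
    next
      case 3
      then show ?thesis by (simp add: sigU_def dangling_def xSf_def)
    qed
  qed
  have sH: "?\<sigma> (HE i j) = (i = r)" if ij: "i \<in> {1..n}" "j \<in> {1..n+1}" for i j
  proof -
    consider "j = 1" | "j \<in> {2..n}" | "j = n+1" using ij by force
    then show ?thesis
    proof cases
      case 1
      then show ?thesis using n1 ij Wr by (simp add: sigU_def dangling_def xWf_def)
    next
      case 2
      then show ?thesis using ij Wr by (simp add: sigU_def)
    next
      case 3
      then show ?thesis using n1 ij Wr WE by (simp add: sigU_def dangling_def xEf_def)
    qed
  qed
  have sA1: "?\<sigma> (AE 1 i j) = ((i,j) = p1)" for i j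
    using p1 p2 by (cases "(i,j) \<in> PU n A") (auto simp: sigU_def dangling_def)
  have sA2: "?\<sigma> (AE 2 i j) = ((i,j) = p2)" for i j
    using p1 p2 by (cases "(i,j) \<in> PU n A") (auto simp: sigU_def dangling_def)
  have HWk: "HW1 (apexU n k A) ?\<sigma> = 1" if "k = 1 \<or> k = 2" "pk \<in> PU n A" "\<And>i j. ?\<sigma> (AE k i j) = ((i,j) = pk)" for k pk
  proof -
    have "{e \<in> apexU n k A. ?\<sigma> e} = {AE k (fst pk) (snd pk)}"
      using that by (cases pk) auto
    then show ?thesis by (simp add: HW1_def)
  qed
  have grid: "grid_val n A ?\<sigma> = prod ?f ({1..n} \<times> {1..n})"
    unfolding grid_val_def
  proof (rule prod.cong[OF refl])
    fix v assume v: "v \<in> {1..n} \<times> {1..n}"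
    obtain i j where ij: "v = (i,j)" by force
    have ij': "i \<in> {1..n}" "j \<in> {1..n}" using v ij by auto
    have e1: "?\<sigma> (VE i j) = ?p i j" using sV[of i j] ij' by auto
    have e2: "?\<sigma> (VE (i+1) j) = (if i = n+1 then xSf n x j else ?p (Suc i) j)" using sV[of "i+1" j] ij' by auto
    have e3: "?\<sigma> (HE i (j+1)) = (i = r)" "?\<sigma> (HE i j) = (i = r)" using sH ij' by auto
    have e4: "(i,j) \<notin> A \<Longrightarrow> (i,j) \<noteq> p1 \<and> (i,j) \<noteq> p2" using p1 p2 ij' by auto
    show "(case v of (i,j) \<Rightarrow> if (i, j) \<in> A
             then PRE (?\<sigma> (VE i j)) (?\<sigma> (HE i (j + 1))) (?\<sigma> (VE (i + 1) j)) (?\<sigma> (HE i j)) (?\<sigma> (AE 1 i j)) (?\<sigma> (AE 2 i j))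
             else PASS (?\<sigma> (VE i j)) (?\<sigma> (HE i (j + 1))) (?\<sigma> (VE (i + 1) j)) (?\<sigma> (HE i j))) = ?f v"
      unfolding ij using e1 e2 e3 e4 sA1 sA2 by (auto simp: PASS_PRE simp del: One_nat_def)
  qed
  have dummy: "dummy_val n ?\<sigma> = prod ?f ({0, n+1} \<times> {1..n})"
    unfolding dummy_val_def
  proof (rule prod.cong[OF refl])
    fix v assume v: "v \<in> {0, n+1} \<times> {1..n}"
    obtain i j where ij: "v = (i,j)" by force
    have ij': "i \<in> {0, n+1}" "j \<in> {1..n}" using v ij by auto
    have e1: "?\<sigma> (VE i j) = ?p i j" using sV[of i j] ij' by auto
    have e2: "?\<sigma> (VE (i+1) j) = (if i = n+1 then xSf n x j else ?p (Suc i) j)" using sV[of "i+1" j] ij' by auto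
    have ir: "(i = r) = False" using ij' r by auto
    show "(case v of (i,j) \<Rightarrow> hsig (?\<sigma> (VE i j)) (?\<sigma> (VE (i + 1) j)) (?\<sigma> (AE 1 i j)) (?\<sigma> (AE 2 i j))) = ?f v"
      unfolding ij using e1 e2 sA1 sA2 ir by (simp add: hsig_def del: One_nat_def)
  qed
  have split: "{0..n+1} \<times> {1..n} = {1..n} \<times> {1..n} \<union> {0, n+1} \<times> {1..n}" by auto
  have gd: "grid_val n A ?\<sigma> * dummy_val n ?\<sigma> = prod ?f ({0..n+1} \<times> {1..n})"
    unfolding grid dummy split by (rule prod.union_disjoint[symmetric]) auto
  have "prod ?f ({0..n+1} \<times> {1..n}) = (if \<forall>j\<in>{1..n}. xSf n x j = ?p (Suc (n+1)) j then 1 else 0) * legal (topf x) p1 p2 * sgnr (topf x) n r p1 p2"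
    by (rule PF) (use p1 p2 A r in auto)
  moreover have "HW1 (apexU n 1 A) ?\<sigma> = 1" by (rule HWk) (use p1 sA1 in auto)
  moreover have "HW1 (apexU n 2 A) ?\<sigma> = 1" by (rule HWk) (use p2 sA2 in auto)
  ultimately show ?thesis using gd by (simp add: valU_def)
qed

lemma SigU_eq:
  assumes A: "A \<subseteq> {1..n} \<times> {1..n}"
    and WE: "\<forall>i\<in>{1..n}. xWf n x i = xEf n x i" and Wr: "\<forall>i\<in>{1..n}. xWf n x i = (i = r)"
    and r: "r \<in> {1..n}" and tc: "\<forall>j\<in>{1..n}. topf x j = (j = c)" and c: "c \<in> {1..n}"
  shows "SigU n A x = (\<Sum>(p1,p2)\<in>PU n A \<times> PU n A. Fc n c r (xSf n x) p1 p2)"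
proof -
  have fA: "finite A" using A finite_subset by blast
  have "SigU n A x = (\<Sum>S\<in>Pow (internalU n A). valU n A (sigU n A x S))"
    by (simp add: SigU_def sigU_def)
  also have "\<dots> = (\<Sum>(p1,p2)\<in>PU n A \<times> PU n A. valU n A (sigU n A x (CU n x p1 p2)))"
  proof (rule red)
    show "finite (internalU n A)" using fin_internalU[OF fA] .
  next
    show "finite (PU n A)" using fA by simp
  next
    fix p1 p2 assume "p1 \<in> PU n A" "p2 \<in> PU n A" then show "CU n x p1 p2 \<subseteq> internalU n A" by (rule CU_sub)
  next
    fix p1 p2 q1 q2 assume "CU n x p1 p2 = CU n x q1 q2" then show "p1 = q1 \<and> p2 = q2" by (rule CU_inj)
  next
    fix S assume "S \<subseteq> internalU n A" "valU n A (sigU n A x S) \<noteq> 0"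
    then show "\<exists>p1\<in>PU n A. \<exists>p2\<in>PU n A. S = CU n x p1 p2" using propU[OF A] by blast
  qed
  also have "\<dots> = (\<Sum>(p1,p2)\<in>PU n A \<times> PU n A. Fc n c r (xSf n x) p1 p2)"
  proof (rule sum.cong[OF refl])
    fix p assume p: "p \<in> PU n A \<times> PU n A"
    obtain a1 b1 a2 b2 where pe: "p = ((a1,b1),(a2,b2))" by (cases p) force
    have m: "(a1,b1) \<in> PU n A" "(a2,b2) \<in> PU n A" using p pe by auto
    then have b: "b1 \<in> {1..n}" "b2 \<in> {1..n}" "a1 < Suc (n+1)" "a2 < Suc (n+1)" using A by auto
    show "(case p of (p1,p2) \<Rightarrow> valU n A (sigU n A x (CU n x p1 p2))) = (case p of (p1,p2) \<Rightarrow> Fc n c r (xSf n x) p1 p2)"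
      unfolding pe using valU_C[OF A m WE Wr r] Fc_eq[OF b(1,2) tc c b(3,4)] by simp
  qed
  finally show ?thesis .
qed

lemma SigU_zero:
  assumes A: "A \<subseteq> {1..n} \<times> {1..n}" and nWE: "\<not> (\<forall>i\<in>{1..n}. xWf n x i = xEf n x i)"
  shows "SigU n A x = 0"
  unfolding SigU_def
proof (rule sum.neutral, rule ballI)
  fix S assume "S \<in> Pow (internalU n A)"
  then have S: "S \<subseteq> internalU n A" by simp
  show "valU n A (\<lambda>e. if e \<in> internalU n A then e \<in> S else dangling n 0 (n + 2) x e) = 0"
  proof (rule ccontr)
    assume "valU n A (\<lambda>e. if e \<in> internalU n A then e \<in> S else dangling n 0 (n + 2) x e) \<noteq> 0"
    then show False using propU[OF A S, of x] nWE unfolding sigU_def by blast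
  qed
qed



lemma wpos_prop:
  assumes "hw s = 1"
  shows "wpos s \<in> {1..length s} \<and> (\<forall>k<length s. s!k = (k = wpos s - 1))"
proof -
  have "card {i. i < length s \<and> s!i} = 1"
    using assms by (simp add: hw_def length_filter_conv_card)
  then obtain k0 where k0: "{i. i < length s \<and> s!i} = {k0}" by (rule card_1_singletonE)
  then have k0l: "k0 < length s" and sk: "\<And>k. k < length s \<Longrightarrow> s!k = (k = k0)" by auto
  let ?P = "\<lambda>v. v \<in> {1..length s} \<and> s = replicate (v - 1) False @ True # replicate (length s - v) False"
  have P0: "?P (Suc k0)"
  proof -
    have "s = replicate k0 False @ True # replicate (length s - Suc k0) False"
    proof (rule nth_equalityI)
      show "length s = length (replicate k0 False @ True # replicate (length s - Suc k0) False)"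
        using k0l by simp
    next
      fix i assume i: "i < length s"
      show "s!i = (replicate k0 False @ True # replicate (length s - Suc k0) False)!i"
        using sk[OF i] i k0l by (cases "i < k0") (auto simp: nth_append nth_Cons' )
    qed
    then show ?thesis using k0l by simp
  qed
  have uniq: "v = Suc k0" if Pv: "?P v" for v
  proof -
    have v: "v \<ge> 1" "v \<le> length s" using Pv by auto
    obtain ys where eq: "s = replicate (v - 1) False @ True # ys" using Pv by blast
    have "s!(v-1) = True" unfolding eq by (simp add: nth_append)
    then show ?thesis using sk[of "v-1"] v by auto
  qed
  have "wpos s = Suc k0" unfolding wpos_def by (rule the_equality[where P = ?P, OF P0 uniq])
  then show ?thesis using k0l sk by auto
qed



theorem mainTheorem13:
  fixes n T :: nat and A :: "(nat \<times> nat) set" and x :: "bool list"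
  assumes "A \<subseteq> {1..n} \<times> {1..n}"
    and "\<forall>u\<in>{1..n}. card {v \<in> {1..n}. (u, v) \<in> A} = T"
    and "length x = 4 * n"
    and "phi_one n x"
  shows "(\<not> phi_prop n x \<longrightarrow> SigU n A x - SigG n A x = 0)
       \<and> (phi_prop n x \<and> (wpos (xW n x), wpos (xN n x)) \<notin> A \<longrightarrow>
            SigU n A x - SigG n A x = int n - 2 * int T - 2)
       \<and> (phi_prop n x \<and> (wpos (xW n x), wpos (xN n x)) \<in> A \<longrightarrow>
            SigU n A x - SigG n A x = int n - 2 * int T + 2)"
proof -
  note A = assms(1)
  have len: "length x = 4 * n" by (rule assms(3))
  have lN: "length (xN n x) = n" and lW: "length (xW n x) = n" and lE: "length (xE n x) = n"
    and lS: "length (xS n x) = n" using len by (auto simp: xN_def xW_def xE_def xS_def)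
  have nthN: "k < n \<Longrightarrow> xN n x ! k = x ! k" for k by (simp add: xN_def)
  have nthW: "k < n \<Longrightarrow> xW n x ! k = x ! (3*n + k)" for k using len by (simp add: xW_def)
  have nthE: "k < n \<Longrightarrow> xE n x ! k = x ! (n + k)" for k using len by (simp add: xE_def)
  have nthS: "k < n \<Longrightarrow> xS n x ! k = x ! (2*n + k)" for k using len by (simp add: xS_def)
  define c where "c = wpos (xN n x)"
  define r where "r = wpos (xW n x)"
  have hN: "hw (xN n x) = 1" and hW: "hw (xW n x) = 1" using assms(4) by (auto simp: phi_one_def)
  have c: "c \<in> {1..n}" and cN: "\<forall>k<n. xN n x ! k = (k = c - 1)"
    using wpos_prop[OF hN] lN unfolding c_def by auto
  have r: "r \<in> {1..n}" and rW: "\<forall>k<n. xW n x ! k = (k = r - 1)"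
    using wpos_prop[OF hW] lW unfolding r_def by auto
  have tc: "\<forall>j\<in>{1..n}. topf x j = (j = c)"
  proof
    fix j assume j: "j \<in> {1..n}"
    then have "topf x j = xN n x ! (j - 1)" using nthN[of "j-1"] by (auto simp: topf_def)
    then show "topf x j = (j = c)" using cN j c by auto
  qed
  have Wr: "\<forall>i\<in>{1..n}. xWf n x i = (i = r)"
  proof
    fix i assume i: "i \<in> {1..n}"
    then have "xWf n x i = xW n x ! (i - 1)" using nthW[of "i-1"] by (auto simp: xWf_def)
    then show "xWf n x i = (i = r)" using rW i r by auto
  qed
  have T: "card {v \<in> {1..n}. (r, v) \<in> A} = T" using assms(2) r by auto
  have WEiff: "(xW n x = xE n x) \<longleftrightarrow> (\<forall>i\<in>{1..n}. xWf n x i = xEf n x i)"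
  proof -
    have "(xW n x = xE n x) \<longleftrightarrow> (\<forall>k<n. xW n x ! k = xE n x ! k)"
      using lW lE by (simp add: list_eq_iff_nth_eq)
    also have "\<dots> \<longleftrightarrow> (\<forall>i\<in>{1..n}. xWf n x i = xEf n x i)"
    proof
      assume h: "\<forall>k<n. xW n x ! k = xE n x ! k"
      show "\<forall>i\<in>{1..n}. xWf n x i = xEf n x i"
      proof
        fix i assume i: "i \<in> {1..n}"
        then show "xWf n x i = xEf n x i" using h[rule_format, of "i-1"] nthW[of "i-1"] nthE[of "i-1"]
          by (auto simp: xWf_def xEf_def)
      qed
    next
      assume h: "\<forall>i\<in>{1..n}. xWf n x i = xEf n x i"
      show "\<forall>k<n. xW n x ! k = xE n x ! k"
      proof (intro allI impI)
        fix k assume k: "k < n"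
        then show "xW n x ! k = xE n x ! k" using h[rule_format, of "k+1"] nthW[of k] nthE[of k]
          by (auto simp: xWf_def xEf_def)
      qed
    qed
    finally show ?thesis .
  qed
  have NSiff: "(xN n x = xS n x) \<longleftrightarrow> (\<forall>j\<in>{1..n}. xSf n x j = (j = c))"
  proof -
    have "(xN n x = xS n x) \<longleftrightarrow> (\<forall>k<n. xN n x ! k = xS n x ! k)"
      using lN lS by (simp add: list_eq_iff_nth_eq)
    also have "\<dots> \<longleftrightarrow> (\<forall>j\<in>{1..n}. xSf n x j = (j = c))"
    proof
      assume h: "\<forall>k<n. xN n x ! k = xS n x ! k"
      show "\<forall>j\<in>{1..n}. xSf n x j = (j = c)"
      proof
        fix j assume j: "j \<in> {1..n}"
        have k: "j - 1 < n" using j by auto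
        have "xSf n x j = xS n x ! (j-1)" using nthS[OF k] j by (simp add: xSf_def)
        also have "\<dots> = xN n x ! (j-1)" using h k by simp
        also have "\<dots> = (j - 1 = c - 1)" using cN k by simp
        finally show "xSf n x j = (j = c)" using j c by auto
      qed
    next
      assume h: "\<forall>j\<in>{1..n}. xSf n x j = (j = c)"
      show "\<forall>k<n. xN n x ! k = xS n x ! k"
      proof (intro allI impI)
        fix k assume k: "k < n"
        then show "xN n x ! k = xS n x ! k" using h[rule_format, of "k+1"] nthS[of k] cN c
          by (auto simp: xSf_def)
      qed
    qed
    finally show ?thesis .
  qed
  show ?thesis
  proof (cases "\<forall>i\<in>{1..n}. xWf n x i = xEf n x i")
    case False
    then have "SigU n A x = 0" "SigG n A x = 0" using SigU_zero[OF A] SigG_zero[OF A] by auto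
    moreover have "\<not> phi_prop n x" using False WEiff by (simp add: phi_prop_def)
    ultimately show ?thesis by simp
  next
    case WE: True
    have "SigU n A x - SigG n A x =
       (if \<forall>j\<in>{1..n}. xSf n x j = (j = c) then 1 else 0) * (int n - 2 - 2 * int T + (if (r,c) \<in> A then 4 else 0))"
      unfolding SigU_eq[OF A WE Wr r tc c] SigG_eq[OF A WE Wr r tc c]
      by (rule sum_total[OF c r A T])
    moreover have "phi_prop n x \<longleftrightarrow> (\<forall>j\<in>{1..n}. xSf n x j = (j = c))"
      using WE WEiff NSiff by (simp add: phi_prop_def)
    ultimately show ?thesis unfolding r_def[symmetric] c_def[symmetric] by auto
  qed
qed


end
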